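(* Let $p>1$, let $\varphi:\mathbb{R}^n\to\mathbb{R}\cup\{+\infty\}$ be proper and lower semicontinuous. Then: (a) for each $\gamma>0$, $\inf_{y}\varphi^p_\gamma(y)=\inf_y\varphi(y)$; (b) for $\gamma>0$, if $\operatorname{prox}^p_{\gamma\varphi}(x)\neq\emptyset$ for every $x\in\mathbb{R}^n$ and $\inf_y\varphi(y)\neq-\infty$, then $\operatorname{argmin}\varphi^p_\gamma=\operatorname{argmin}\varphi$; (c) if $\varphi$ is high-order prox-bounded with threshold $\gamma^{\varphi,p}>0$ and $\inf\varphi\neq-\infty$, then for each $\gamma\in(0,\gamma^{\varphi,p})$, $\operatorname{argmin}\varphi^p_\gamma=\operatorname{argmin}\varphi$; (d) for each $\gamma>0$, $\operatorname{argmin}\varphi\subseteq\mathrm{Fix}(\operatorname{prox}^p_{\gamma\varphi})\subseteq\mathrm{Fcrit}(\varphi)\subseteq\mathrm{Mcrit}(\varphi)$; (e) if $\varphi$ is high-order prox-bounded with threshold $\gamma^{\varphi,p}>0$ and $\inf\varphi\neq-\infty$, then for each $\gamma\in(0,\gamma^{\varphi,p})$, $\operatorname{argmin}\varphi\subseteq\mathrm{Fcrit}(\varphi^p_\gamma)\subseteq\mathrm{Fix}(\operatorname{prox}^p_{\gamma\varphi})\subseteq\mathrm{Fcrit}(\varphi)\subseteq\mathrm{Mcrit}(\varphi)$.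
   Context: $\operatorname{prox}^p_{\gamma\varphi}(x):=\operatorname{argmin}_{y}\big(\varphi(y)+\frac{1}{p\gamma}\|x-y\|^p\big)$, $\varphi^p_\gamma(x):=\inf_{y}\big(\varphi(y)+\frac{1}{p\gamma}\|x-y\|^p\big)$. $\varphi$ is high-order prox-bounded (order $p$) if $\varphi^p_\gamma(x)>-\infty$ for some $\gamma>0,x$; the supremum of such $\gamma$ is the threshold $\gamma^{\varphi,p}$. $\mathrm{Fix}(\operatorname{prox}^p_{\gamma\varphi})=\{x: x\in\operatorname{prox}^p_{\gamma\varphi}(x)\}$ (proximal fixed points). For a proper lsc $h$, $\mathrm{Fcrit}(h)=\{x\in\operatorname{dom}h:0\in\hat\partial h(x)\}$ and $\mathrm{Mcrit}(h)=\{x\in\operatorname{dom}h:0\in\partial h(x)\}$, where $\hat\partial$ and $\partial$ are the Fréchet and Mordukhovich (limiting) subdifferentials. *)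

theory Defs
  imports "HOL-Analysis.Analysis"
begin

text \<open>A function into R \<union> {+\<infinity>} is
  modelled as an ereal-valued function never taking the value -\<infinity>.\<close>

definition proper_fun :: "('a \<Rightarrow> ereal) \<Rightarrow> bool" where
  "proper_fun f \<longleftrightarrow> (\<forall>x. f x \<noteq> -\<infinity>) \<and> (\<exists>x. f x < \<infinity>)"

definition lsc_fun :: "('a::topological_space \<Rightarrow> ereal) \<Rightarrow> bool" where
  "lsc_fun f \<longleftrightarrow> (\<forall>x. f x \<le> Liminf (at x) f)"

definition edom :: "('a \<Rightarrow> ereal) \<Rightarrow> 'a set" where
  "edom f = {x. f x < \<infinity>}"

definition argmin_set :: "('a \<Rightarrow> ereal) \<Rightarrow> 'a set" where
  "argmin_set f = {x. \<forall>y. f x \<le> f y}"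

definition hmoreau :: "real \<Rightarrow> real \<Rightarrow> ('a::real_normed_vector \<Rightarrow> ereal) \<Rightarrow> 'a \<Rightarrow> ereal" where
  "hmoreau p \<gamma> \<phi> x = (INF y. \<phi> y + ereal (norm (x - y) powr p / (p * \<gamma>)))"

definition hprox :: "real \<Rightarrow> real \<Rightarrow> ('a::real_normed_vector \<Rightarrow> ereal) \<Rightarrow> 'a \<Rightarrow> 'a set" where
  "hprox p \<gamma> \<phi> x = argmin_set (\<lambda>y. \<phi> y + ereal (norm (x - y) powr p / (p * \<gamma>)))"

definition prox_fix :: "real \<Rightarrow> real \<Rightarrow> ('a::real_normed_vector \<Rightarrow> ereal) \<Rightarrow> 'a set" where
  "prox_fix p \<gamma> \<phi> = {x. x \<in> hprox p \<gamma> \<phi> x}"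

definition hprox_bounded :: "real \<Rightarrow> ('a::real_normed_vector \<Rightarrow> ereal) \<Rightarrow> bool" where
  "hprox_bounded p \<phi> \<longleftrightarrow> (\<exists>\<gamma>>0. \<exists>x. hmoreau p \<gamma> \<phi> x > -\<infinity>)"

text \<open>Threshold: supremum of admissible \<gamma> (possibly +\<infinity>, hence ereal).\<close>
definition prox_threshold :: "real \<Rightarrow> ('a::real_normed_vector \<Rightarrow> ereal) \<Rightarrow> ereal" where
  "prox_threshold p \<phi> = (SUP \<gamma> \<in> {\<gamma>. \<gamma> > 0 \<and> (\<exists>x. hmoreau p \<gamma> \<phi> x > -\<infinity>)}. ereal \<gamma>)"

text \<open>Frechet (regular) subdifferential: v \<in> \<partial>^f(x) iff f(x) finite and
  liminf_{y\<rightarrow>x, y\<noteq>x} (f y - f x - <v, y - x>)/|y - x| \<ge> 0, written out in \<epsilon>-\<delta> form.\<close>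
definition frechet_subdiff :: "('a::real_inner \<Rightarrow> ereal) \<Rightarrow> 'a \<Rightarrow> 'a set" where
  "frechet_subdiff f x = {v. \<bar>f x\<bar> \<noteq> \<infinity> \<and>
     (\<forall>\<epsilon>>0. \<exists>\<delta>>0. \<forall>y. norm (y - x) < \<delta> \<longrightarrow>
        f y \<ge> f x + ereal (inner v (y - x) - \<epsilon> * norm (y - x)))}"

definition limiting_subdiff :: "('a::real_inner \<Rightarrow> ereal) \<Rightarrow> 'a \<Rightarrow> 'a set" where
  "limiting_subdiff f x = {v. \<bar>f x\<bar> \<noteq> \<infinity> \<and>
     (\<exists>xs vs. xs \<longlonglongrightarrow> x \<and> (\<lambda>k. f (xs k)) \<longlonglongrightarrow> f x \<and>
        (\<forall>k. vs k \<in> frechet_subdiff f (xs k)) \<and> vs \<longlonglongrightarrow> v)}"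

definition Fcrit :: "('a::real_inner \<Rightarrow> ereal) \<Rightarrow> 'a set" where
  "Fcrit h = {x \<in> edom h. 0 \<in> frechet_subdiff h x}"

definition Mcrit :: "('a::real_inner \<Rightarrow> ereal) \<Rightarrow> 'a set" where
  "Mcrit h = {x \<in> edom h. 0 \<in> limiting_subdiff h x}"

end

theory Submission
  imports Defs
begin

lemma env_le: "hmoreau p \<gamma> \<phi> x \<le> \<phi> y + ereal (norm (x - y) powr p / (p * \<gamma>))"
  unfolding hmoreau_def by (rule INF_lower) simp

lemma env_le_self: "hmoreau p \<gamma> \<phi> x \<le> \<phi> x"
  using env_le[of p \<gamma> \<phi> x x] by simp

lemma env_ge_inf:
  assumes "p > 0" "\<gamma> > 0"
  shows "(INF y. \<phi> y) \<le> hmoreau p \<gamma> \<phi> x"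
  unfolding hmoreau_def
proof (rule INF_greatest)
  fix y
  have "(INF y. \<phi> y) \<le> \<phi> y" by (rule INF_lower) simp
  also have "\<phi> y \<le> \<phi> y + ereal (norm (x - y) powr p / (p * \<gamma>))"
    using assms by (intro ereal_le_add_self) simp
  finally show "(INF y. \<phi> y) \<le> \<phi> y + ereal (norm (x - y) powr p / (p * \<gamma>))" .
qed

lemma lsc_nbhd:
  assumes "lsc_fun \<phi>" "ereal c < \<phi> x"
  shows "\<exists>\<delta>>0. \<forall>y. norm (y - x) < \<delta> \<longrightarrow> ereal c < \<phi> y"
proof -
  have "ereal c < Liminf (at x) \<phi>" using assms unfolding lsc_fun_def
    using less_le_trans by blast
  hence "\<forall>\<^sub>F y in at x. ereal c < \<phi> y" by (rule less_LiminfD)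
  then obtain d where d: "d > 0" "\<forall>y. y \<noteq> x \<and> dist y x < d \<longrightarrow> ereal c < \<phi> y"
    unfolding eventually_at by blast
  show ?thesis
  proof (intro exI[of _ d] conjI allI impI)
    fix y assume "norm (y - x) < d"
    then show "ereal c < \<phi> y" using d assms(2) by (cases "y = x") (auto simp: dist_norm)
  qed (use d in auto)
qed



lemma inf_env:
  assumes "p > 0" "\<gamma> > 0"
  shows "(INF y. hmoreau p \<gamma> \<phi> y) = (INF y. \<phi> y)"
proof (rule antisym)
  show "(INF y. hmoreau p \<gamma> \<phi> y) \<le> (INF y. \<phi> y)"
    by (rule INF_mono) (use env_le_self in blast)
  show "(INF y. \<phi> y) \<le> (INF y. hmoreau p \<gamma> \<phi> y)"
    by (rule INF_greatest) (rule env_ge_inf[OF assms])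
qed

lemma argmin_val: "x \<in> argmin_set \<phi> \<Longrightarrow> \<phi> x = (INF y. \<phi> y)"
  unfolding argmin_set_def by (auto intro!: antisym INF_greatest INF_lower)

lemma inf_finite:
  assumes "proper_fun \<phi>" "(INF y. \<phi> y) \<noteq> -\<infinity>"
  obtains mr where "(INF y. \<phi> y) = ereal mr"
proof -
  obtain z where "\<phi> z < \<infinity>" using assms(1) unfolding proper_fun_def by blast
  moreover have "(INF y. \<phi> y) \<le> \<phi> z" by (rule INF_lower) simp
  ultimately have "(INF y. \<phi> y) \<noteq> \<infinity>" by auto
  with assms(2) that show ?thesis by (cases "(INF y. \<phi> y)") auto
qed

lemma argmin_env:
  assumes "p > 0" "\<gamma> > 0" "proper_fun \<phi>" "lsc_fun \<phi>" "(INF y. \<phi> y) \<noteq> -\<infinity>"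
  shows "argmin_set (hmoreau p \<gamma> \<phi>) = argmin_set \<phi>"
proof
  obtain mr where mr: "(INF y. \<phi> y) = ereal mr" using inf_finite[OF assms(3,5)] by blast
  show "argmin_set \<phi> \<subseteq> argmin_set (hmoreau p \<gamma> \<phi>)"
  proof
    fix x assume x: "x \<in> argmin_set \<phi>"
    have "\<forall>y. hmoreau p \<gamma> \<phi> x \<le> hmoreau p \<gamma> \<phi> y"
      using env_le_self[of p \<gamma> \<phi> x] argmin_val[OF x] env_ge_inf[OF assms(1,2)]
      by (metis order_trans)
    thus "x \<in> argmin_set (hmoreau p \<gamma> \<phi>)" unfolding argmin_set_def by blast
  qed
  show "argmin_set (hmoreau p \<gamma> \<phi>) \<subseteq> argmin_set \<phi>"
  proof
    fix x assume x: "x \<in> argmin_set (hmoreau p \<gamma> \<phi>)"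
    have ex: "hmoreau p \<gamma> \<phi> x = ereal mr"
      using argmin_val[OF x] inf_env[OF assms(1,2), of \<phi>] mr by simp
    have "\<phi> x \<le> ereal mr"
    proof (rule ccontr)
      assume "\<not> \<phi> x \<le> ereal mr"
      hence "ereal mr < \<phi> x" by simp
      then obtain c where c: "ereal mr < ereal c" "ereal c < \<phi> x"
        by (meson ereal_dense2 less_ereal.simps(1) order.strict_trans ereal_less_eq(3) less_imp_le)
      obtain \<delta> where d: "\<delta> > 0" "\<forall>y. norm (y - x) < \<delta> \<longrightarrow> ereal c < \<phi> y"
        using lsc_nbhd[OF assms(4) c(2)] by blast
      define k where "k = min c (mr + \<delta> powr p / (p * \<gamma>))"
      have kpos: "mr < k" using c d assms(1,2) unfolding k_def by auto
      have "ereal k \<le> \<phi> y + ereal (norm (x - y) powr p / (p * \<gamma>))" for y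
      proof (cases "norm (y - x) < \<delta>")
        case True
        hence "ereal c < \<phi> y" using d by blast
        also have "\<phi> y \<le> \<phi> y + ereal (norm (x - y) powr p / (p * \<gamma>))"
          using assms(1,2) by (intro ereal_le_add_self) simp
        finally show ?thesis unfolding k_def by (meson min.cobounded1 order_trans less_imp_le ereal_less_eq(3))
      next
        case False
        hence "\<delta> powr p \<le> norm (x - y) powr p" using d(1) assms(1)
          by (simp add: norm_minus_commute powr_mono2)
        hence "\<delta> powr p / (p * \<gamma>) \<le> norm (x - y) powr p / (p * \<gamma>)"
          using assms(1,2) by (simp add: divide_right_mono)
        hence "ereal k \<le> ereal mr + ereal (norm (x - y) powr p / (p * \<gamma>))"
          unfolding k_def by (simp add: min_le_iff_disj)
        also have "\<dots> \<le> \<phi> y + ereal (norm (x - y) powr p / (p * \<gamma>))"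
          using mr INF_lower[of y UNIV \<phi>] by (intro add_right_mono) auto
        finally show ?thesis .
      qed
      hence "ereal k \<le> hmoreau p \<gamma> \<phi> x" unfolding hmoreau_def by (rule INF_greatest)
      with ex kpos show False by simp
    qed
    hence "\<forall>y. \<phi> x \<le> \<phi> y" using mr INF_lower[of _ UNIV \<phi>] by (metis UNIV_I order_trans)
    thus "x \<in> argmin_set \<phi>" unfolding argmin_set_def by blast
  qed
qed



lemma small_pow:
  fixes n p \<gamma> \<epsilon> :: real
  assumes "p > 1" "\<gamma> > 0" "\<epsilon> > 0" "0 \<le> n" "n < (\<epsilon>*p*\<gamma>) powr (1/(p-1))"
  shows "n powr p / (p*\<gamma>) \<le> \<epsilon>*n"
proof (cases "n = 0")
  case True thus ?thesis using assms by simp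
next
  case False
  hence n: "n > 0" using assms by simp
  have "n powr (p-1) \<le> ((\<epsilon>*p*\<gamma>) powr (1/(p-1))) powr (p-1)"
    using assms by (intro powr_mono2) auto
  also have "\<dots> = \<epsilon>*p*\<gamma>" using assms by (simp add: powr_powr)
  finally have a: "n powr (p-1) \<le> \<epsilon>*p*\<gamma>" .
  have "n powr p = n powr ((p-1) + 1)" by simp
  also have "\<dots> = n powr (p-1) * n" using n by (subst powr_add) simp
  also have "\<dots> \<le> \<epsilon>*p*\<gamma>*n" using a n by simp
  finally show ?thesis using assms by (simp add: divide_simps mult_ac)
qed

lemma shrink_pow:
  fixes t n p :: real
  assumes "0 \<le> t" "t \<le> 1" "0 \<le> n" "p \<ge> 1"
  shows "((1-t)*n) powr p \<le> (1-t) * n powr p"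
proof (cases "t = 1")
  case True thus ?thesis using assms by simp
next
  case False
  hence "0 < 1 - t" using assms by simp
  hence "(1-t) powr p \<le> (1-t) powr 1" using assms by (intro powr_mono') auto
  hence "(1-t) powr p * n powr p \<le> (1-t) * n powr p" using \<open>0 < 1 - t\<close>
    by (simp add: mult_right_mono)
  thus ?thesis using assms by (simp add: powr_mult)
qed

lemma fix_fcrit:
  assumes "p > 1" "\<gamma> > 0" "proper_fun \<phi>" "x \<in> prox_fix p \<gamma> \<phi>"
  shows "x \<in> Fcrit \<phi>"
proof -
  have le: "\<phi> x \<le> \<phi> y + ereal (norm (x - y) powr p / (p * \<gamma>))" for y
    using assms(1,4) unfolding prox_fix_def hprox_def argmin_set_def
    by simp
  obtain z where z: "\<phi> z < \<infinity>" using assms(3) unfolding proper_fun_def by blast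
  have "\<phi> z + ereal (norm (x - z) powr p / (p * \<gamma>)) < \<infinity>" using z by simp
  hence fin: "\<phi> x < \<infinity>" using le[of z] by (rule le_less_trans[rotated])
  have nm: "\<phi> x \<noteq> -\<infinity>" using assms(3) unfolding proper_fun_def by blast
  obtain a where a: "\<phi> x = ereal a" using fin nm by (cases "\<phi> x") auto
  have "0 \<in> frechet_subdiff \<phi> x"
    unfolding frechet_subdiff_def
  proof (intro CollectI conjI allI impI)
    show "\<bar>\<phi> x\<bar> \<noteq> \<infinity>" using a by simp
    fix \<epsilon> :: real assume e: "\<epsilon> > 0"
    show "\<exists>\<delta>>0. \<forall>y. norm (y - x) < \<delta> \<longrightarrow> \<phi> x + ereal (inner 0 (y - x) - \<epsilon> * norm (y - x)) \<le> \<phi> y"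
    proof (intro exI[of _ "(\<epsilon>*p*\<gamma>) powr (1/(p-1))"] conjI allI impI)
      show "0 < (\<epsilon>*p*\<gamma>) powr (1/(p-1))" using e assms by simp
      fix y assume y: "norm (y - x) < (\<epsilon>*p*\<gamma>) powr (1/(p-1))"
      have sp: "norm (x - y) powr p / (p*\<gamma>) \<le> \<epsilon>*norm (y - x)"
        using small_pow[OF assms(1,2) e _ y] by (simp add: norm_minus_commute)
      show "\<phi> x + ereal (inner 0 (y - x) - \<epsilon> * norm (y - x)) \<le> \<phi> y"
      proof (cases "\<phi> y")
        case (real b)
        then show ?thesis using le[of y] a sp by simp
      qed (use assms(3) in \<open>auto simp: proper_fun_def\<close>)
    qed
  qed
  thus ?thesis unfolding Fcrit_def edom_def using fin by simp
qed

lemma fcrit_mcrit: "Fcrit \<phi> \<subseteq> Mcrit \<phi>"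
proof
  fix x assume x: "x \<in> Fcrit \<phi>"
  hence f: "0 \<in> frechet_subdiff \<phi> x" and e: "x \<in> edom \<phi>" unfolding Fcrit_def by auto
  hence "\<bar>\<phi> x\<bar> \<noteq> \<infinity>" unfolding frechet_subdiff_def by simp
  hence "0 \<in> limiting_subdiff \<phi> x" unfolding limiting_subdiff_def
    using f by (intro CollectI conjI exI[of _ "\<lambda>k. x"] exI[of _ "\<lambda>k. 0"]) auto
  thus "x \<in> Mcrit \<phi>" using e unfolding Mcrit_def by blast
qed

lemma argmin_fix: assumes "p > 0" "\<gamma> > 0" shows "argmin_set \<phi> \<subseteq> prox_fix p \<gamma> \<phi>"
  unfolding argmin_set_def prox_fix_def hprox_def
proof (intro subsetI CollectI allI)
  fix x y assume "x \<in> {x. \<forall>y. \<phi> x \<le> \<phi> y}"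
  hence "\<phi> x \<le> \<phi> y" by blast
  show "\<phi> x + ereal (norm (x - x) powr p / (p * \<gamma>)) \<le> \<phi> y + ereal (norm (x - y) powr p / (p * \<gamma>))"
    using \<open>\<phi> x \<le> \<phi> y\<close> assms by (simp add: order_trans[OF _ ereal_le_add_self])
qed



lemma argmin_fcrit_env:
  assumes "p > 0" "\<gamma> > 0" "proper_fun \<phi>" "(INF y. \<phi> y) \<noteq> -\<infinity>"
  shows "argmin_set \<phi> \<subseteq> Fcrit (hmoreau p \<gamma> \<phi>)"
proof
  fix x assume x: "x \<in> argmin_set \<phi>"
  obtain mr where mr: "(INF y. \<phi> y) = ereal mr" using inf_finite[OF assms(3,4)] by blast
  have ex: "hmoreau p \<gamma> \<phi> x = ereal mr"
    using env_le_self[of p \<gamma> \<phi> x] env_ge_inf[OF assms(1,2), of \<phi> x] argmin_val[OF x] mr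
    by simp
  have ge: "ereal mr \<le> hmoreau p \<gamma> \<phi> y" for y using env_ge_inf[OF assms(1,2), of \<phi> y] mr by simp
  have "0 \<in> frechet_subdiff (hmoreau p \<gamma> \<phi>) x"
    unfolding frechet_subdiff_def
  proof (intro CollectI conjI allI impI)
    show "\<bar>hmoreau p \<gamma> \<phi> x\<bar> \<noteq> \<infinity>" using ex by simp
    fix \<epsilon> :: real assume e: "\<epsilon> > 0"
    show "\<exists>\<delta>>0. \<forall>y. norm (y - x) < \<delta> \<longrightarrow> hmoreau p \<gamma> \<phi> x + ereal (inner 0 (y - x) - \<epsilon> * norm (y - x)) \<le> hmoreau p \<gamma> \<phi> y"
    proof (intro exI[of _ 1] conjI allI impI)
      fix y
      have h: "ereal (mr - \<epsilon> * norm (y - x)) \<le> ereal mr" using e by simp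
      show "hmoreau p \<gamma> \<phi> x + ereal (inner 0 (y - x) - \<epsilon> * norm (y - x)) \<le> hmoreau p \<gamma> \<phi> y"
        using ex order_trans[OF h ge[of y]] by simp
    qed simp
  qed
  thus "x \<in> Fcrit (hmoreau p \<gamma> \<phi>)" unfolding Fcrit_def edom_def using ex by simp
qed

lemma fcrit_env_fix:
  fixes \<phi> :: "'a::real_inner \<Rightarrow> ereal"
  assumes "p > 1" "\<gamma> > 0" "proper_fun \<phi>" "lsc_fun \<phi>" "x \<in> Fcrit (hmoreau p \<gamma> \<phi>)"
  shows "x \<in> prox_fix p \<gamma> \<phi>"
proof -
  let ?e = "hmoreau p \<gamma> \<phi>"
  have fs: "0 \<in> frechet_subdiff ?e x" using assms(5) unfolding Fcrit_def by blast
  then obtain er where er: "?e x = ereal er" unfolding frechet_subdiff_def by (cases "?e x") auto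
  have fr: "\<forall>\<epsilon>>0. \<exists>\<delta>>0. \<forall>y. norm (y - x) < \<delta> \<longrightarrow> ereal (er - \<epsilon> * norm (y - x)) \<le> ?e y"
    using fs er unfolding frechet_subdiff_def by simp
  have key: "\<phi> x \<le> ereal er"
  proof (rule ccontr)
    assume "\<not> \<phi> x \<le> ereal er"
    hence "ereal er < \<phi> x" by simp
    from ereal_dense2[OF this] obtain c where c0: "ereal er < ereal c" "ereal c < \<phi> x"
      by blast
    hence c: "er < c" "ereal c < \<phi> x" by auto
    obtain r where r: "r > 0" "\<forall>y. norm (y - x) < r \<longrightarrow> ereal c < \<phi> y"
      using lsc_nbhd[OF assms(4) c(2)] by blast
    define \<epsilon> where "\<epsilon> = r powr (p-1) / (2*p*\<gamma>)"
    have epos: "\<epsilon> > 0" using r assms unfolding \<epsilon>_def by simp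
    obtain \<delta> where d: "\<delta> > 0" "\<forall>y. norm (y - x) < \<delta> \<longrightarrow> ereal (er - \<epsilon> * norm (y - x)) \<le> ?e y"
      using fr epos by blast
    define s where "s = min (\<delta>/2) r"
    have spos: "s > 0" using d r unfolding s_def by simp
    define \<kappa> where "\<kappa> = min (c - er) (s * r powr (p-1) / (2*p*\<gamma>))"
    have kpos: "\<kappa> > 0" using c spos r assms unfolding \<kappa>_def by simp
    have "ereal (er + \<kappa>) \<le> \<phi> y + ereal (norm (x - y) powr p / (p * \<gamma>))" for y
    proof (cases "norm (y - x) < r")
      case True
      hence "ereal (er + \<kappa>) < \<phi> y" using r c unfolding \<kappa>_def
        by (smt (verit, best) ereal_less_le ereal_less_eq(3))
      also have "\<phi> y \<le> \<phi> y + ereal (norm (x - y) powr p / (p * \<gamma>))"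
        using assms(1,2) by (intro ereal_le_add_self) simp
      finally show ?thesis by simp
    next
      case False
      show ?thesis
      proof (cases "\<phi> y")
        case PInf thus ?thesis by simp
      next
        case MInf thus ?thesis using assms(3) unfolding proper_fun_def by blast
      next
        case (real b)
        define n where "n = norm (y - x)"
        have nr: "r \<le> n" using False unfolding n_def by simp
        hence npos: "n > 0" using r by simp
        define t where "t = s / n"
        have t01: "0 < t" "t \<le> 1" using spos npos nr unfolding t_def s_def by auto
        define x' where "x' = x + t *\<^sub>R (y - x)"
        have nx': "norm (x' - x) = s" using t01 npos spos unfolding x'_def t_def n_def by simp
        have "s < \<delta>" using d unfolding s_def by simp
        hence lo: "ereal (er - \<epsilon> * s) \<le> ?e x'" using d nx' by fastforce
        have xy: "x' - y = (1 - t) *\<^sub>R (x - y)" unfolding x'_def by (simp add: algebra_simps)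
        have "norm (x' - y) = (1 - t) * n"
          using t01 unfolding xy n_def by (simp add: norm_minus_commute)
        hence "?e x' \<le> ereal (b + ((1 - t) * n) powr p / (p * \<gamma>))"
          using env_le[of p \<gamma> \<phi> x' y] real by simp
        hence A: "er - \<epsilon> * s \<le> b + ((1 - t) * n) powr p / (p * \<gamma>)"
          using order_trans[OF lo] by (metis ereal_less_eq(3))
        have "((1 - t) * n) powr p \<le> (1 - t) * n powr p"
          using shrink_pow[of t n p] t01 npos assms(1) by simp
        hence B: "((1 - t) * n) powr p / (p * \<gamma>) \<le> (1 - t) * n powr p / (p * \<gamma>)"
          using assms by (simp add: divide_right_mono)
        have "n powr p = n powr ((p-1) + 1)" by simp
        also have "\<dots> = n powr (p-1) * n" using npos by (subst powr_add) simp
        finally have "n powr p = n powr (p-1) * n" .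
        hence C: "t * n powr p = s * n powr (p-1)" using npos unfolding t_def by simp
        have "r powr (p-1) \<le> n powr (p-1)" using nr r assms by (intro powr_mono2) auto
        hence D: "s * r powr (p-1) \<le> s * n powr (p-1)" using spos by simp
        have "er + \<kappa> \<le> er + s * r powr (p-1) / (2*p*\<gamma>)" unfolding \<kappa>_def by simp
        also have "\<dots> = er - \<epsilon> * s + s * r powr (p-1) / (p*\<gamma>)"
          unfolding \<epsilon>_def using assms by (simp add: field_simps)
        also have "\<dots> \<le> b + (1 - t) * n powr p / (p * \<gamma>) + t * n powr p / (p * \<gamma>)"
        proof -
          have "s * r powr (p-1) / (p*\<gamma>) \<le> s * n powr (p-1) / (p*\<gamma>)"
            using D assms by (simp add: divide_right_mono)
          thus ?thesis using A B C by simp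
        qed
        also have "\<dots> = b + n powr p / (p * \<gamma>)" by (simp add: add_divide_distrib[symmetric] algebra_simps)
        finally show ?thesis using real by (simp add: n_def norm_minus_commute)
      qed
    qed
    hence "ereal (er + \<kappa>) \<le> ?e x" unfolding hmoreau_def by (rule INF_greatest)
    with er kpos show False by simp
  qed
  have "\<phi> x \<le> \<phi> y + ereal (norm (x - y) powr p / (p * \<gamma>))" for y
    using key er env_le[of p \<gamma> \<phi> x y] by simp
  thus ?thesis unfolding prox_fix_def hprox_def argmin_set_def by simp
qed

theorem theorem2:
  fixes \<phi> :: "'a::euclidean_space \<Rightarrow> ereal" and p :: real
  assumes "p > 1" and "proper_fun \<phi>" and "lsc_fun \<phi>"
  shows "(\<forall>\<gamma>>0. (INF y. hmoreau p \<gamma> \<phi> y) = (INF y. \<phi> y))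
    \<and> (\<forall>\<gamma>>0. (\<forall>x. hprox p \<gamma> \<phi> x \<noteq> {}) \<and> (INF y. \<phi> y) \<noteq> -\<infinity> \<longrightarrow>
          argmin_set (hmoreau p \<gamma> \<phi>) = argmin_set \<phi>)
    \<and> (hprox_bounded p \<phi> \<and> prox_threshold p \<phi> > 0 \<and> (INF y. \<phi> y) \<noteq> -\<infinity> \<longrightarrow>
          (\<forall>\<gamma>. 0 < \<gamma> \<and> ereal \<gamma> < prox_threshold p \<phi> \<longrightarrow>
             argmin_set (hmoreau p \<gamma> \<phi>) = argmin_set \<phi>))
    \<and> (\<forall>\<gamma>>0. argmin_set \<phi> \<subseteq> prox_fix p \<gamma> \<phi> \<and> prox_fix p \<gamma> \<phi> \<subseteq> Fcrit \<phi>
          \<and> Fcrit \<phi> \<subseteq> Mcrit \<phi>)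
    \<and> (hprox_bounded p \<phi> \<and> prox_threshold p \<phi> > 0 \<and> (INF y. \<phi> y) \<noteq> -\<infinity> \<longrightarrow>
          (\<forall>\<gamma>. 0 < \<gamma> \<and> ereal \<gamma> < prox_threshold p \<phi> \<longrightarrow>
             argmin_set \<phi> \<subseteq> Fcrit (hmoreau p \<gamma> \<phi>)
             \<and> Fcrit (hmoreau p \<gamma> \<phi>) \<subseteq> prox_fix p \<gamma> \<phi>
             \<and> prox_fix p \<gamma> \<phi> \<subseteq> Fcrit \<phi> \<and> Fcrit \<phi> \<subseteq> Mcrit \<phi>))"
  proof -
  have p0: "p > 0" using assms(1) by simp
  have A: "argmin_set (hmoreau p \<gamma> \<phi>) = argmin_set \<phi>"
    if "(INF y. \<phi> y) \<noteq> -\<infinity>" "\<gamma> > 0" for \<gamma>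
    using argmin_env[OF p0 that(2) assms(2,3) that(1)] .
  have F: "prox_fix p \<gamma> \<phi> \<subseteq> Fcrit \<phi>" if "\<gamma> > 0" for \<gamma>
    using fix_fcrit[OF assms(1) that assms(2)] by blast
  have G: "Fcrit (hmoreau p \<gamma> \<phi>) \<subseteq> prox_fix p \<gamma> \<phi>" if "\<gamma> > 0" for \<gamma>
    using fcrit_env_fix[OF assms(1) that assms(2,3)] by blast
  have H: "argmin_set \<phi> \<subseteq> Fcrit (hmoreau p \<gamma> \<phi>)"
    if "(INF y. \<phi> y) \<noteq> -\<infinity>" "\<gamma> > 0" for \<gamma>
    using argmin_fcrit_env[OF p0 that(2) assms(2) that(1)] .
  have M: "Fcrit \<phi> \<subseteq> Mcrit \<phi>" by (rule fcrit_mcrit)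
  have I: "(INF y. hmoreau p \<gamma> \<phi> y) = (INF y. \<phi> y)" if "\<gamma> > 0" for \<gamma>
    using inf_env[OF p0 that] .
  have Z: "argmin_set \<phi> \<subseteq> prox_fix p \<gamma> \<phi>" if "\<gamma> > 0" for \<gamma>
    using argmin_fix[OF p0 that] .
  show ?thesis
  proof (intro conjI allI impI)
  qed (use A F G H M I Z in \<open>simp_all\<close>)
qed


end
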